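(* Let $(Q,f)$ be a triangulation quiver with at least three vertices. The following are equivalent: (i) $(Q,f)$ is the tetrahedral triangulation quiver; (ii) $n_\alpha=3$ for every arrow $\alpha\in Q_1$; (iii) $g^3$ is the identity on $Q_1$; (iv) there is an arrow $\beta\in Q_1$ with $n_\beta=n_{\bar\beta}=n_{f(\beta)}=n_{f(\bar\beta)}=3$.
   Context: A triangulation quiver is $(Q,f)$ with $Q$ a finite connected quiver, each vertex the source and target of exactly two arrows, and $f$ a permutation of $Q_1$ with $s(f(\alpha))=t(\alpha)$ and $f^3=\mathrm{id}$. For $\alpha\in Q_1$, $\bar\alpha$ is the other arrow with source $s(\alpha)$, $g(\alpha)=\overline{f(\alpha)}$, and $n_\alpha$ is the size of the $g$-orbit of $\alpha$. The tetrahedral triangulation quiver has vertices $1,\dots,6$, arrows $\alpha:3\to1,\beta:4\to2,\gamma:4\to1,\delta:1\to5,\varepsilon:2\to5,\eta:5\to4,\xi:5\to3,\varrho:2\to6,\sigma:3\to2,\mu:6\to3,\nu:1\to6,\omega:6\to4$ and $f$-orbits $(\alpha\,\nu\,\mu),(\beta\,\varrho\,\omega),(\gamma\,\delta\,\eta),(\varepsilon\,\xi\,\sigma)$; (i) means isomorphic to it as a quiver with permutation. *)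

theory Defs
  imports Main
begin

definition quiver_connected :: "'v set \<Rightarrow> 'a set \<Rightarrow> ('a \<Rightarrow> 'v) \<Rightarrow> ('a \<Rightarrow> 'v) \<Rightarrow> bool" where
  "quiver_connected V A s t \<longleftrightarrow>
     (\<forall>u\<in>V. \<forall>w\<in>V. (u, w) \<in> ({(s a, t a) | a. a \<in> A} \<union> {(t a, s a) | a. a \<in> A})\<^sup>*)"

definition triangulation_quiver ::
  "'v set \<Rightarrow> 'a set \<Rightarrow> ('a \<Rightarrow> 'v) \<Rightarrow> ('a \<Rightarrow> 'v) \<Rightarrow> ('a \<Rightarrow> 'a) \<Rightarrow> bool" where
  "triangulation_quiver V A s t f \<longleftrightarrow>
     finite V \<and> finite A \<and> V \<noteq> {} \<and>
     (\<forall>a\<in>A. s a \<in> V \<and> t a \<in> V) \<and>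
     quiver_connected V A s t \<and>
     (\<forall>v\<in>V. card {a\<in>A. s a = v} = 2 \<and> card {a\<in>A. t a = v} = 2) \<and>
     bij_betw f A A \<and>
     (\<forall>a\<in>A. s (f a) = t a) \<and>
     (\<forall>a\<in>A. f (f (f a)) = a)"

definition bar :: "'a set \<Rightarrow> ('a \<Rightarrow> 'v) \<Rightarrow> 'a \<Rightarrow> 'a" where
  "bar A s a = (THE b. b \<in> A \<and> s b = s a \<and> b \<noteq> a)"

definition gperm :: "'a set \<Rightarrow> ('a \<Rightarrow> 'v) \<Rightarrow> ('a \<Rightarrow> 'a) \<Rightarrow> 'a \<Rightarrow> 'a" where
  "gperm A s f a = bar A s (f a)"

definition norb :: "'a set \<Rightarrow> ('a \<Rightarrow> 'v) \<Rightarrow> ('a \<Rightarrow> 'a) \<Rightarrow> 'a \<Rightarrow> nat" where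
  "norb A s f a = card {(gperm A s f ^^ k) a | k. True}"

definition tq_iso ::
  "'v set \<Rightarrow> 'a set \<Rightarrow> ('a \<Rightarrow> 'v) \<Rightarrow> ('a \<Rightarrow> 'v) \<Rightarrow> ('a \<Rightarrow> 'a) \<Rightarrow>
   'w set \<Rightarrow> 'b set \<Rightarrow> ('b \<Rightarrow> 'w) \<Rightarrow> ('b \<Rightarrow> 'w) \<Rightarrow> ('b \<Rightarrow> 'b) \<Rightarrow> bool" where
  "tq_iso V A s t f V' A' s' t' f' \<longleftrightarrow>
     (\<exists>\<phi> \<psi>. bij_betw \<phi> V V' \<and> bij_betw \<psi> A A' \<and>
        (\<forall>a\<in>A. s' (\<psi> a) = \<phi> (s a) \<and> t' (\<psi> a) = \<phi> (t a) \<and> \<psi> (f a) = f' (\<psi> (a))))"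

datatype tarrow = T_alpha | T_beta | T_gamma | T_delta | T_eps | T_eta | T_xi
  | T_rho | T_sigma | T_mu | T_nu | T_omega

fun tet_s :: "tarrow \<Rightarrow> nat" where
  "tet_s T_alpha = 3" | "tet_s T_beta = 4" | "tet_s T_gamma = 4" | "tet_s T_delta = 1"
| "tet_s T_eps = 2" | "tet_s T_eta = 5" | "tet_s T_xi = 5" | "tet_s T_rho = 2"
| "tet_s T_sigma = 3" | "tet_s T_mu = 6" | "tet_s T_nu = 1" | "tet_s T_omega = 6"

fun tet_t :: "tarrow \<Rightarrow> nat" where
  "tet_t T_alpha = 1" | "tet_t T_beta = 2" | "tet_t T_gamma = 1" | "tet_t T_delta = 5"
| "tet_t T_eps = 5" | "tet_t T_eta = 4" | "tet_t T_xi = 3" | "tet_t T_rho = 6"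
| "tet_t T_sigma = 2" | "tet_t T_mu = 3" | "tet_t T_nu = 6" | "tet_t T_omega = 4"

fun tet_f :: "tarrow \<Rightarrow> tarrow" where
  "tet_f T_alpha = T_nu" | "tet_f T_nu = T_mu" | "tet_f T_mu = T_alpha"
| "tet_f T_beta = T_rho" | "tet_f T_rho = T_omega" | "tet_f T_omega = T_beta"
| "tet_f T_gamma = T_delta" | "tet_f T_delta = T_eta" | "tet_f T_eta = T_gamma"
| "tet_f T_eps = T_xi" | "tet_f T_xi = T_sigma" | "tet_f T_sigma = T_eps"

definition is_tetrahedral ::
  "'v set \<Rightarrow> 'a set \<Rightarrow> ('a \<Rightarrow> 'v) \<Rightarrow> ('a \<Rightarrow> 'v) \<Rightarrow> ('a \<Rightarrow> 'a) \<Rightarrow> bool" where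
  "is_tetrahedral V A s t f \<longleftrightarrow> tq_iso V A s t f {1..6::nat} UNIV tet_s tet_t tet_f"

end

theory Submission
  imports Defs
begin


fun tbar :: "tarrow \<Rightarrow> tarrow" where
  "tbar T_delta = T_nu" | "tbar T_nu = T_delta"
| "tbar T_eps = T_rho" | "tbar T_rho = T_eps"
| "tbar T_alpha = T_sigma" | "tbar T_sigma = T_alpha"
| "tbar T_beta = T_gamma" | "tbar T_gamma = T_beta"
| "tbar T_eta = T_xi" | "tbar T_xi = T_eta"
| "tbar T_mu = T_omega" | "tbar T_omega = T_mu"

definition tg :: "tarrow \<Rightarrow> tarrow" where "tg x = tbar (tet_f x)"

lemma tet_s_eq: "tet_s x = tet_s y \<Longrightarrow> y = x \<or> y = tbar x"
  by (cases x; cases y; simp)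

lemma tet_s_tbar: "tet_s (tbar x) = tet_s x" by (cases x; simp)
lemma tet_s_f: "tet_s (tet_f x) = tet_t x" by (cases x; simp)
lemma tbar_neq: "tbar x \<noteq> x" by (cases x; simp)
lemma tg3: "tg (tg (tg x)) = x" by (cases x; simp add: tg_def)
lemma tg_neq: "tg x \<noteq> x" by (cases x; simp add: tg_def)
lemma tet_s_range: "tet_s x \<in> {1..6}" by (cases x; simp)
lemma tet_s_surj: "k \<in> {1..6::nat} \<Longrightarrow> \<exists>x. tet_s x = k"
proof -
  assume "k \<in> {1..6::nat}"
  then have "k = 1 \<or> k = 2 \<or> k = 3 \<or> k = 4 \<or> k = 5 \<or> k = 6" by auto
  then show ?thesis by (metis tet_s.simps)
qed

fun wapp :: "('x \<Rightarrow> 'x) \<Rightarrow> ('x \<Rightarrow> 'x) \<Rightarrow> bool list \<Rightarrow> 'x \<Rightarrow> 'x" where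
  "wapp F Bb [] x = x"
| "wapp F Bb (c # w) x = (if c then F (wapp F Bb w x) else Bb (wapp F Bb w x))"

lemma wapp_hom:
  assumes "\<And>x. \<psi> (F1 x) = F2 (\<psi> x)" "\<And>x. \<psi> (B1 x) = B2 (\<psi> x)"
  shows "\<psi> (wapp F1 B1 w x) = wapp F2 B2 w (\<psi> x)"
  by (induction w) (auto simp: assms)

lemma pair_lemma:
  "x \<noteq> y \<Longrightarrow> \<exists>w\<in>{[],[True],[True,True],[True,False]}.
     wapp tet_f tbar w y = tbar (wapp tet_f tbar w x) \<or>
     wapp tet_f tbar w y = tg (wapp tet_f tbar w x) \<or>
     wapp tet_f tbar w y = tg (tg (wapp tet_f tbar w x))"
  by (cases x; cases y; simp add: tg_def)



locale tq =
  fixes V :: "'v set" and A :: "'a set" and s t :: "'a \<Rightarrow> 'v" and f :: "'a \<Rightarrow> 'a"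
  assumes tq: "triangulation_quiver V A s t f"
begin

abbreviation "B \<equiv> bar A s"
abbreviation "G \<equiv> gperm A s f"

lemma finA: "finite A" and finV: "finite V" and st_in: "a \<in> A \<Longrightarrow> s a \<in> V \<and> t a \<in> V"
  and conn: "quiver_connected V A s t"
  and out_card: "v \<in> V \<Longrightarrow> card {a\<in>A. s a = v} = 2"
  and fbij: "bij_betw f A A" and sf: "a \<in> A \<Longrightarrow> s (f a) = t a"
  and f3: "a \<in> A \<Longrightarrow> f (f (f a)) = a"
  using tq unfolding triangulation_quiver_def by auto

lemma f_in: "a \<in> A \<Longrightarrow> f a \<in> A" using fbij by (meson bij_betwE)
lemma f_inj: "a \<in> A \<Longrightarrow> c \<in> A \<Longrightarrow> f a = f c \<Longrightarrow> a = c"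
  using fbij by (meson bij_betw_imp_inj_on inj_onD)

lemma out_two: "a \<in> A \<Longrightarrow> \<exists>d. d \<in> A \<and> s d = s a \<and> d \<noteq> a \<and> (\<forall>c\<in>A. s c = s a \<longrightarrow> c = a \<or> c = d)"
proof -
  assume a: "a \<in> A"
  have "card {c\<in>A. s c = s a} = 2" using out_card st_in a by auto
  then obtain p q where pq: "{c\<in>A. s c = s a} = {p, q}" "p \<noteq> q" by (meson card_2_iff)
  have "a \<in> {p,q}" using pq a by blast
  then show ?thesis using pq by (smt (verit, ccfv_threshold) insert_iff mem_Collect_eq singletonD)
qed

lemma bar_props: "a \<in> A \<Longrightarrow> B a \<in> A \<and> s (B a) = s a \<and> B a \<noteq> a"
proof -
  assume a: "a \<in> A"
  obtain d where d: "d \<in> A" "s d = s a" "d \<noteq> a" "\<forall>c\<in>A. s c = s a \<longrightarrow> c = a \<or> c = d"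
    using out_two[OF a] by blast
  have "B a = d" unfolding bar_def
    by (rule the_equality) (use d in auto)
  then show ?thesis using d by simp
qed

lemma B_in: "a \<in> A \<Longrightarrow> B a \<in> A" using bar_props by blast
lemma B_src: "a \<in> A \<Longrightarrow> s (B a) = s a" using bar_props by blast
lemma B_neq: "a \<in> A \<Longrightarrow> B a \<noteq> a" using bar_props by blast

lemma out_cases: "a \<in> A \<Longrightarrow> c \<in> A \<Longrightarrow> s c = s a \<Longrightarrow> c = a \<or> c = B a"
proof -
  assume a: "a \<in> A" and c: "c \<in> A" "s c = s a"
  obtain d where d: "d \<in> A" "s d = s a" "d \<noteq> a" "\<forall>c\<in>A. s c = s a \<longrightarrow> c = a \<or> c = d"
    using out_two[OF a] by blast
  have "B a = d \<or> B a = a" using d bar_props[OF a] by blast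
  then show ?thesis using d c bar_props[OF a] by blast
qed

lemma BB: "a \<in> A \<Longrightarrow> B (B a) = a"
proof -
  assume a: "a \<in> A"
  have "a = B a \<or> a = B (B a)" using out_cases[of "B a" a] bar_props[OF a] a by metis
  then show ?thesis using bar_props[OF a] by metis
qed

lemma B_inj: "a \<in> A \<Longrightarrow> c \<in> A \<Longrightarrow> B a = B c \<Longrightarrow> a = c" using BB by metis

lemma G_def': "G a = B (f a)" by (simp add: gperm_def)
lemma G_in: "a \<in> A \<Longrightarrow> G a \<in> A" by (simp add: G_def' B_in f_in)
lemma G_inj: "a \<in> A \<Longrightarrow> c \<in> A \<Longrightarrow> G a = G c \<Longrightarrow> a = c"
  by (simp add: G_def') (meson B_inj f_in f_inj)
lemma f_BG: "a \<in> A \<Longrightarrow> f a = B (G a)" by (simp add: G_def' BB f_in)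
lemma G_src: "a \<in> A \<Longrightarrow> s (G a) = t a" by (simp add: G_def' B_src f_in sf)

lemma G3_rel: "x \<in> A \<Longrightarrow> G (G (G x)) = x \<Longrightarrow> f (G (G x)) = B x"
  by (metis BB G_def' G_in f_in)

lemma funpow_in: "a \<in> A \<Longrightarrow> (G ^^ k) a \<in> A"
  by (induction k) (auto simp: G_in)

lemma N3: assumes a: "a \<in> A"
  shows "norb A s f a = 3 \<longleftrightarrow> (G (G (G a)) = a \<and> G a \<noteq> a)"
proof -
  let ?O = "{(G ^^ k) a | k. True}"
  have OA: "?O \<subseteq> A" using funpow_in a by blast
  have finO: "finite ?O" using OA finA finite_subset by blast
  have sub3: "{a, G a, G (G a)} \<subseteq> ?O"
  proof -
    have "(G ^^ 0) a = a" "(G ^^ 1) a = G a" "(G ^^ 2) a = G (G a)"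
      by (simp_all add: numeral_2_eq_2)
    then show ?thesis by (metis (mono_tags, lifting) empty_subsetI insert_subset mem_Collect_eq)
  qed
  show ?thesis
  proof
    assume n: "norb A s f a = 3"
    then have cO: "card ?O = 3" by (simp add: norb_def)
    have ne1: "G a \<noteq> a"
    proof
      assume h: "G a = a"
      have "\<And>k. (G ^^ k) a = a" subgoal for k by (induction k) (auto simp: h) done
      then have "?O \<subseteq> {a}" by auto
      then have "card ?O \<le> card {a}" by (intro card_mono) auto
      then have "card ?O \<le> 1" by simp
      then show False using cO by simp
    qed
    have ne2: "G (G a) \<noteq> a"
    proof
      assume h: "G (G a) = a"
      have "\<And>k. (G ^^ k) a \<in> {a, G a}" subgoal for k by (induction k) (auto simp: h) done
      then have "?O \<subseteq> {a, G a}" by auto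
      then have "card ?O \<le> card {a, G a}" by (intro card_mono) auto
      moreover have "card {a, G a} \<le> 2" by (simp add: card_insert_if)
      ultimately have "card ?O \<le> 2" by linarith
      then show False using cO by simp
    qed
    have ne3: "G (G a) \<noteq> G a" using G_inj[of "G a" a] G_in a ne1 by metis
    have c3: "card {a, G a, G (G a)} = 3" using ne1 ne2 ne3 by simp
    have Oeq: "?O = {a, G a, G (G a)}"
      using card_subset_eq[OF finO sub3] c3 cO by simp
    have m: "G (G (G a)) \<in> ?O"
    proof -
      have "G (G (G a)) = (G ^^ 3) a" by (simp add: numeral_3_eq_3)
      then show ?thesis by blast
    qed
    have "G (G (G a)) \<in> {a, G a, G (G a)}" using m by (simp only: Oeq)
    moreover have "G (G (G a)) \<noteq> G a" using G_inj[of "G (G a)" a] G_in a ne2 by metis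
    moreover have "G (G (G a)) \<noteq> G (G a)" using G_inj[of "G (G a)" "G a"] G_in a ne3 by metis
    ultimately show "G (G (G a)) = a \<and> G a \<noteq> a" using ne1 by blast
  next
    assume h: "G (G (G a)) = a \<and> G a \<noteq> a"
    have "\<And>k. (G ^^ k) a \<in> {a, G a, G (G a)}" subgoal for k by (induction k) (auto simp: h) done
    then have "?O \<subseteq> {a, G a, G (G a)}" by auto
    then have Oeq: "?O = {a, G a, G (G a)}" using sub3 by blast
    have ne2: "G (G a) \<noteq> a" using h by metis
    have ne3: "G (G a) \<noteq> G a" using G_inj[of "G a" a] G_in a h by metis
    have c3: "card {a, G a, G (G a)} = 3" using conjunct2[OF h] ne2 ne3 by simp
    show "norb A s f a = 3" unfolding norb_def using Oeq c3 by simp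
  qed
qed

end


definition tpsi :: "('a\<Rightarrow>'a) \<Rightarrow> ('a\<Rightarrow>'a) \<Rightarrow> ('a\<Rightarrow>'a) \<Rightarrow> 'a \<Rightarrow> tarrow \<Rightarrow> 'a" where
  "tpsi G Bb F b x = (case x of T_alpha \<Rightarrow> b | T_delta \<Rightarrow> G b | T_xi \<Rightarrow> G (G b)
    | T_sigma \<Rightarrow> Bb b | T_rho \<Rightarrow> G (Bb b) | T_mu \<Rightarrow> G (G (Bb b))
    | T_nu \<Rightarrow> F b | T_omega \<Rightarrow> G (F b) | T_gamma \<Rightarrow> G (G (F b))
    | T_eps \<Rightarrow> F (Bb b) | T_eta \<Rightarrow> G (F (Bb b)) | T_beta \<Rightarrow> G (G (F (Bb b))))"

context tq begin

lemma construct: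
  assumes b: "b \<in> A" and R1: "G (G (G b)) = b" and R2: "G (G (G (B b))) = B b"
    and R3: "G (G (G (f b))) = f b" and R4: "G (G (G (f (B b)))) = f (B b)"
  shows "tpsi G B f b x \<in> A" "tpsi G B f b (tet_f x) = f (tpsi G B f b x)"
    "tpsi G B f b (tbar x) = B (tpsi G B f b x)"
proof -
  have i2: "B b \<in> A" using b B_in by blast
  have i3: "f b \<in> A" using b f_in by blast
  have i4: "f (B b) \<in> A" using i2 f_in by blast
  note ins = b i2 i3 i4 G_in f_in B_in
  have K1: "f (G (G b)) = B b" using G3_rel[OF b R1] .
  have K2: "f (G (G (B b))) = b" using G3_rel[OF i2 R2] BB[OF b] by simp
  have K3: "f (G (G (f b))) = G b" using G3_rel[OF i3 R3] G_def' by simp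
  have K4: "f (G (G (f (B b)))) = G (B b)" using G3_rel[OF i4 R4] G_def' by simp
  have gg1: "G (G b) \<in> A" "G (G (B b)) \<in> A" "G (G (f b)) \<in> A" "G (G (f (B b))) \<in> A"
    "G b \<in> A" "G (B b) \<in> A" "G (f b) \<in> A" "G (f (B b)) \<in> A"
    using ins by auto
  have K1': "G (G b) = f (f (B b))"
  proof -
    have "G (G b) = f (f (f (G (G b))))" using f3 gg1 by simp
    then show ?thesis by (simp add: K1)
  qed
  have K2': "G (G (B b)) = f (f b)"
  proof -
    have "G (G (B b)) = f (f (f (G (G (B b)))))" using f3 gg1 by simp
    then show ?thesis by (simp add: K2)
  qed
  have de: "f (G b) = G (f (B b))"
  proof -
    have "f (G b) = B (G (G b))" using f_BG gg1 by simp
    also have "\<dots> = G (f (B b))" using K1' G_def' by simp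
    finally show ?thesis .
  qed
  have K3': "G (G (f b)) = f (G (f (B b)))"
  proof -
    have "G (G (f b)) = f (f (f (G (G (f b)))))" using f3 gg1 by simp
    then show ?thesis by (simp add: K3 de)
  qed
  have rh: "f (G (B b)) = G (f b)"
  proof -
    have "f (G (B b)) = B (G (G (B b)))" using f_BG gg1 by simp
    also have "\<dots> = G (f b)" using K2' G_def' by simp
    finally show ?thesis .
  qed
  have K4': "G (G (f (B b))) = f (G (f b))"
  proof -
    have "G (G (f (B b))) = f (f (f (G (G (f (B b))))))" using f3 gg1 by simp
    then show ?thesis by (simp add: K4 rh)
  qed
  have b2: "B (f b) = G b" by (simp add: G_def')
  have b3: "B (f (B b)) = G (B b)" by (simp add: G_def')
  have b1: "B (G b) = f b" using b2 BB[OF i3] by simp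
  have b4: "B (G (B b)) = f (B b)" using b3 BB[OF i4] by simp
  have b6: "B (G (G b)) = G (f (B b))" using K1' G_def' by simp
  have b5: "B (G (f (B b))) = G (G b)" using BB[of "G (G b)"] gg1 b6 by simp
  have b7: "B (G (G (B b))) = G (f b)" using K2' G_def' by simp
  have b8: "B (G (f b)) = G (G (B b))" using BB[of "G (G (B b))"] gg1 b7 by simp
  have b10: "B (G (G (f b))) = G (G (f (B b)))"
    using G_def'[of "G (f (B b))"] K3' by simp
  have b9: "B (G (G (f (B b)))) = G (G (f b))" using BB[of "G (G (f b))"] gg1 b10 by simp
  have b11: "B (B b) = b" using BB b by blast
  note eqs = K1 K2 K3 K4 K1'[symmetric] K2'[symmetric] de K3'[symmetric] rh K4'[symmetric]
    b1 b2 b3 b4 b5 b6 b7 b8 b9 b10 b11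
  show "tpsi G B f b x \<in> A" by (cases x) (simp_all add: tpsi_def ins)
  show "tpsi G B f b (tet_f x) = f (tpsi G B f b x)" by (cases x) (simp_all add: tpsi_def eqs)
  show "tpsi G B f b (tbar x) = B (tpsi G B f b x)" by (cases x) (simp_all add: tpsi_def eqs)
qed

lemma surj_psi:
  assumes inA: "\<And>x. \<psi> x \<in> A" and hf: "\<And>x. \<psi> (tet_f x) = f (\<psi> x)"
    and hb: "\<And>x. \<psi> (tbar x) = B (\<psi> x)"
  shows "A = range \<psi>"
proof -
  have clos: "a \<in> range \<psi>" if "a \<in> A" "s a \<in> s ` range \<psi>" for a
  proof -
    from that(2) obtain x where x: "s a = s (\<psi> x)" by blast
    then have "a = \<psi> x \<or> a = B (\<psi> x)" using out_cases[of "\<psi> x" a] inA that by auto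
    then show ?thesis using hb by (metis rangeI)
  qed
  have VS: "v \<in> s ` range \<psi>" if v: "v \<in> V" for v
  proof -
    have "(s (\<psi> T_alpha), v) \<in> ({(s a, t a) | a. a \<in> A} \<union> {(t a, s a) | a. a \<in> A})\<^sup>*"
      using conn v st_in[OF inA[of T_alpha]] unfolding quiver_connected_def by blast
    then show ?thesis
    proof (induction rule: rtrancl_induct)
      case base
      then show ?case by blast
    next
      case (step y z)
      from step.hyps(2) show ?case
      proof
        assume "(y, z) \<in> {(s a, t a) | a. a \<in> A}"
        then obtain a where a: "a \<in> A" "y = s a" "z = t a" by blast
        then obtain x where "a = \<psi> x" using clos step.IH by blast
        then have "z = s (\<psi> (tet_f x))" using a hf sf by simp
        then show ?case by blast
      next
        assume "(y, z) \<in> {(t a, s a) | a. a \<in> A}"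
        then obtain a where a: "a \<in> A" "y = t a" "z = s a" by blast
        then have "s (f a) \<in> s ` range \<psi>" using step.IH sf by simp
        then obtain x where "f a = \<psi> x" using clos f_in a by blast
        then have "a = \<psi> (tet_f (tet_f x))" using hf f3[OF a(1)] by simp
        then show ?case using a by blast
      qed
    qed
  qed
  show ?thesis
  proof
    show "A \<subseteq> range \<psi>" using clos VS st_in by blast
    show "range \<psi> \<subseteq> A" using inA by blast
  qed
qed

lemma psi_G:
  assumes hf: "\<And>x. \<psi> (tet_f x) = f (\<psi> x)" and hb: "\<And>x. \<psi> (tbar x) = B (\<psi> x)"
  shows "\<psi> (tg x) = G (\<psi> x)"
  by (simp add: tg_def hf hb G_def')

lemma inj_psi:
  assumes hf: "\<And>x. \<psi> (tet_f x) = f (\<psi> x)" and hb: "\<And>x. \<psi> (tbar x) = B (\<psi> x)"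
    and inA: "\<And>x. \<psi> x \<in> A"
    and d1: "\<And>z. G (\<psi> z) \<noteq> \<psi> z" and d2: "\<And>z. G (G (\<psi> z)) \<noteq> \<psi> z"
  shows "inj \<psi>"
proof (rule injI, rule ccontr)
  fix x y assume e: "\<psi> x = \<psi> y" and ne: "x \<noteq> y"
  obtain w where w: "wapp tet_f tbar w y = tbar (wapp tet_f tbar w x) \<or>
     wapp tet_f tbar w y = tg (wapp tet_f tbar w x) \<or>
     wapp tet_f tbar w y = tg (tg (wapp tet_f tbar w x))"
    using pair_lemma[OF ne] by blast
  let ?p = "wapp tet_f tbar w x" and ?q = "wapp tet_f tbar w y"
  have "\<psi> ?p = \<psi> ?q" using wapp_hom[of \<psi> tet_f f tbar B, OF hf hb] e by metis
  then have "\<psi> ?q = B (\<psi> ?p) \<or> \<psi> ?q = G (\<psi> ?p) \<or> \<psi> ?q = G (G (\<psi> ?p))"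
    using w psi_G[OF hf hb] hb by auto
  moreover have "\<psi> ?q = \<psi> ?p" using \<open>\<psi> ?p = \<psi> ?q\<close> by simp
  ultimately show False using d1[of ?p] d2[of ?p] B_neq[OF inA[of ?p]] by auto
qed

end


context tq begin

lemma orbit3: "a \<in> A \<Longrightarrow> G (G (G a)) = a \<Longrightarrow> G a \<noteq> a \<Longrightarrow>
   G (G a) \<noteq> a \<and> G (G a) \<noteq> G a \<and> a \<noteq> G a \<and> a \<noteq> G (G a) \<and> G a \<noteq> G (G a)"
  using G_inj[of "G a" a] G_in by metis

lemma out_ne: "v \<in> V \<Longrightarrow> \<exists>a\<in>A. s a = v"
proof -
  assume "v \<in> V"
  then have "card {a\<in>A. s a = v} = 2" using out_card by blast
  then have "{a\<in>A. s a = v} \<noteq> {}" by (metis card.empty zero_neq_numeral)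
  then show ?thesis by blast
qed

lemma A_ne: "\<exists>a. a \<in> A"
  using tq out_ne unfolding triangulation_quiver_def by blast

lemma iv_to_i:
  assumes b: "b \<in> A" and n1: "norb A s f b = 3" and n2: "norb A s f (B b) = 3"
    and n3: "norb A s f (f b) = 3" and n4: "norb A s f (f (B b)) = 3"
  shows "is_tetrahedral V A s t f"
proof -
  have i2: "B b \<in> A" using b B_in by blast
  have i3: "f b \<in> A" using b f_in by blast
  have i4: "f (B b) \<in> A" using i2 f_in by blast
  have R1: "G (G (G b)) = b" and Q1: "G b \<noteq> b" using N3[OF b] n1 by auto
  have R2: "G (G (G (B b))) = B b" and Q2: "G (B b) \<noteq> B b" using N3[OF i2] n2 by auto
  have R3: "G (G (G (f b))) = f b" and Q3: "G (f b) \<noteq> f b" using N3[OF i3] n3 by auto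
  have R4: "G (G (G (f (B b)))) = f (B b)" and Q4: "G (f (B b)) \<noteq> f (B b)"
    using N3[OF i4] n4 by auto
  note O1 = orbit3[OF b R1 Q1] and O2 = orbit3[OF i2 R2 Q2]
    and O3 = orbit3[OF i3 R3 Q3] and O4 = orbit3[OF i4 R4 Q4]
  define \<psi> where "\<psi> = tpsi G B f b"
  have inA: "\<And>x. \<psi> x \<in> A" and hf: "\<And>x. \<psi> (tet_f x) = f (\<psi> x)"
    and hb: "\<And>x. \<psi> (tbar x) = B (\<psi> x)"
    using construct[OF b R1 R2 R3 R4] unfolding \<psi>_def by auto
  have Arng: "A = range \<psi>" using surj_psi[OF inA hf hb] .
  have d1: "G (\<psi> z) \<noteq> \<psi> z" for z
    by (cases z) (simp_all add: \<psi>_def tpsi_def R1 R2 R3 R4 Q1 Q2 Q3 Q4 O1 O2 O3 O4)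
  have d2: "G (G (\<psi> z)) \<noteq> \<psi> z" for z
    by (cases z) (simp_all add: \<psi>_def tpsi_def R1 R2 R3 R4 Q1 Q2 Q3 Q4 O1 O2 O3 O4)
  have injp: "inj \<psi>" using inj_psi[OF hf hb inA d1 d2] .
  have bijp: "bij_betw \<psi> UNIV A" using injp Arng by (simp add: bij_betw_def)
  define \<psi>' where "\<psi>' = inv \<psi>"
  have pp': "a \<in> A \<Longrightarrow> \<psi> (\<psi>' a) = a" for a using Arng \<psi>'_def by (simp add: f_inv_into_f)
  have p'p: "\<psi>' (\<psi> x) = x" for x using injp \<psi>'_def by simp
  have bij': "bij_betw \<psi>' A UNIV" using bij_betw_inv_into[OF bijp] \<psi>'_def by simp
  have p'f: "a \<in> A \<Longrightarrow> \<psi>' (f a) = tet_f (\<psi>' a)" for a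
    by (metis pp' p'p hf)
  have p'b: "a \<in> A \<Longrightarrow> \<psi>' (B a) = tbar (\<psi>' a)" for a
    by (metis pp' p'p hb)
  define \<phi> where "\<phi> v = tet_s (\<psi>' (SOME a. a \<in> A \<and> s a = v))" for v
  have phis: "a \<in> A \<Longrightarrow> \<phi> (s a) = tet_s (\<psi>' a)" for a
  proof -
    assume a: "a \<in> A"
    let ?c = "SOME c. c \<in> A \<and> s c = s a"
    have c: "?c \<in> A \<and> s ?c = s a" using someI[of "\<lambda>c. c \<in> A \<and> s c = s a" a] a by blast
    then have "?c = a \<or> ?c = B a" using out_cases a by blast
    then show ?thesis unfolding \<phi>_def using p'b a tet_s_tbar by metis
  qed
  have bphi: "bij_betw \<phi> V {1..6}"
    unfolding bij_betw_def
  proof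
    show "inj_on \<phi> V"
    proof (rule inj_onI)
      fix v w assume v: "v \<in> V" and w: "w \<in> V" and e: "\<phi> v = \<phi> w"
      obtain a where a: "a \<in> A" "s a = v" using out_ne v by blast
      obtain c where c: "c \<in> A" "s c = w" using out_ne w by blast
      have "tet_s (\<psi>' c) = tet_s (\<psi>' a)" using e phis a c by metis
      then have "\<psi>' c = \<psi>' a \<or> \<psi>' c = tbar (\<psi>' a)" by (metis tet_s_eq)
      then have "c = a \<or> c = B a" using p'b pp' a c B_in by metis
      then show "v = w" using a c B_src by metis
    qed
    show "\<phi> ` V = {1..6}"
    proof
      show "\<phi> ` V \<subseteq> {1..6}" unfolding \<phi>_def using tet_s_range by blast
      show "{1..6} \<subseteq> \<phi> ` V"
      proof
        fix k :: nat assume "k \<in> {1..6}"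
        then obtain x where x: "tet_s x = k" using tet_s_surj by blast
        have "\<phi> (s (\<psi> x)) = k" using phis[OF inA[of x]] p'p x by simp
        moreover have "s (\<psi> x) \<in> V" using st_in inA by blast
        ultimately show "k \<in> \<phi> ` V" by blast
      qed
    qed
  qed
  have props: "\<forall>a\<in>A. tet_s (\<psi>' a) = \<phi> (s a) \<and> tet_t (\<psi>' a) = \<phi> (t a) \<and> \<psi>' (f a) = tet_f (\<psi>' a)"
  proof
    fix a assume a: "a \<in> A"
    have "\<phi> (t a) = tet_t (\<psi>' a)" using phis[OF f_in[OF a]] sf[OF a] p'f[OF a] tet_s_f by simp
    then show "tet_s (\<psi>' a) = \<phi> (s a) \<and> tet_t (\<psi>' a) = \<phi> (t a) \<and> \<psi>' (f a) = tet_f (\<psi>' a)"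
      using phis[OF a] p'f[OF a] by simp
  qed
  show ?thesis unfolding is_tetrahedral_def tq_iso_def using bphi bij' props by blast
qed

lemma i_to_iii:
  assumes "is_tetrahedral V A s t f"
  shows "\<forall>a\<in>A. G (G (G a)) = a \<and> G a \<noteq> a"
proof -
  obtain \<phi> \<psi> where bp: "bij_betw \<psi> A (UNIV :: tarrow set)"
    and pr: "\<forall>a\<in>A. tet_s (\<psi> a) = \<phi> (s a) \<and> tet_t (\<psi> a) = \<phi> (t a) \<and> \<psi> (f a) = tet_f (\<psi> a)"
    using assms unfolding is_tetrahedral_def tq_iso_def by blast
  have inj: "inj_on \<psi> A" using bp bij_betw_def by blast
  have pb: "\<psi> (B a) = tbar (\<psi> a)" if a: "a \<in> A" for a
  proof -
    have "tet_s (\<psi> (B a)) = tet_s (\<psi> a)" using pr a B_in B_src by metis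
    then have "\<psi> (B a) = \<psi> a \<or> \<psi> (B a) = tbar (\<psi> a)" by (metis tet_s_eq)
    moreover have "\<psi> (B a) \<noteq> \<psi> a" using inj a B_in B_neq inj_onD by metis
    ultimately show ?thesis by blast
  qed
  have pg: "\<psi> (G a) = tg (\<psi> a)" if a: "a \<in> A" for a
    using pb[OF f_in[OF a]] pr a by (simp add: G_def' tg_def)
  show ?thesis
  proof
    fix a assume a: "a \<in> A"
    have "\<psi> (G (G (G a))) = \<psi> a" using pg a G_in tg3 by simp
    then have "G (G (G a)) = a" using inj a G_in inj_onD by metis
    moreover have "G a \<noteq> a" using pg[OF a] tg_neq by metis
    ultimately show "G (G (G a)) = a \<and> G a \<noteq> a" by blast
  qed
qed

lemma iii_nofix:
  assumes R: "\<forall>a\<in>A. G (G (G a)) = a" and cV: "card V \<ge> 3" and c: "c \<in> A"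
  shows "G c \<noteq> c"
proof
  assume h: "G c = c"
  have i2: "B c \<in> A" using c B_in by blast
  have i3: "f c \<in> A" using c f_in by blast
  have i4: "f (B c) \<in> A" using i2 f_in by blast
  define \<psi> where "\<psi> = tpsi G B f c"
  have inA: "\<And>x. \<psi> x \<in> A" and hf: "\<And>x. \<psi> (tet_f x) = f (\<psi> x)"
    and hb: "\<And>x. \<psi> (tbar x) = B (\<psi> x)"
    using construct[OF c] R c i2 i3 i4 unfolding \<psi>_def by auto
  have Arng: "A = range \<psi>" using surj_psi[OF inA hf hb] .
  have W: "\<psi> (wapp tet_f tbar w T_alpha) = \<psi> (wapp tet_f tbar w T_delta)" for w
  proof -
    have "\<psi> T_alpha = \<psi> T_delta" using h by (simp add: \<psi>_def tpsi_def)
    then show ?thesis using wapp_hom[of \<psi> tet_f f tbar B, OF hf hb] by metis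
  qed
  have e1: "\<psi> T_delta = \<psi> T_alpha" using W[of "[]"] by simp
  have e2: "\<psi> T_eps = \<psi> T_gamma" using W[of "[True,True,False,True]"] by simp
  have e3: "\<psi> T_eta = \<psi> T_sigma" using W[of "[True,False,True]"] by simp
  have e4: "\<psi> T_xi = \<psi> T_alpha" using W[of "[True,True,False]"] by simp
  have e5: "\<psi> T_rho = \<psi> T_beta" using W[of "[True,False,True,True]"] by simp
  have e6: "\<psi> T_mu = \<psi> T_gamma" using W[of "[True,True]"] by simp
  have e7: "\<psi> T_nu = \<psi> T_sigma" using W[of "[False]"] by simp
  have e8: "\<psi> T_omega = \<psi> T_beta" using W[of "[False,True,True]"] by simp
  have s1: "s (\<psi> T_sigma) = s (\<psi> T_alpha)" using hb[of T_alpha] B_src inA by simp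
  have s2: "s (\<psi> T_gamma) = s (\<psi> T_beta)" using hb[of T_beta] B_src inA by simp
  have "V \<subseteq> {s (\<psi> T_alpha), s (\<psi> T_beta)}"
  proof
    fix v assume "v \<in> V"
    then obtain a where a: "a \<in> A" "s a = v" using out_ne by blast
    then obtain x where x: "a = \<psi> x" using Arng by blast
    show "v \<in> {s (\<psi> T_alpha), s (\<psi> T_beta)}"
      using a x by (cases x) (simp_all add: e1 e2 e3 e4 e5 e6 e7 e8 s1 s2)
  qed
  then have "card V \<le> card {s (\<psi> T_alpha), s (\<psi> T_beta)}" by (intro card_mono) auto
  moreover have "card {s (\<psi> T_alpha), s (\<psi> T_beta)} \<le> 2" by (simp add: card_insert_if)
  ultimately show False using cV by linarith
qed

end

theorem lemma6p6:
  fixes V :: "'v set" and A :: "'a set" and s t :: "'a \<Rightarrow> 'v" and f :: "'a \<Rightarrow> 'a"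
  assumes "triangulation_quiver V A s t f"
    and "card V \<ge> 3"
  shows "(is_tetrahedral V A s t f \<longleftrightarrow> (\<forall>a\<in>A. norb A s f a = 3))
    \<and> ((\<forall>a\<in>A. norb A s f a = 3) \<longleftrightarrow> (\<forall>a\<in>A. gperm A s f (gperm A s f (gperm A s f a)) = a))
    \<and> ((\<forall>a\<in>A. gperm A s f (gperm A s f (gperm A s f a)) = a) \<longleftrightarrow>
       (\<exists>b\<in>A. norb A s f b = 3 \<and> norb A s f (bar A s b) = 3 \<and>
              norb A s f (f b) = 3 \<and> norb A s f (f (bar A s b)) = 3))"
proof -
  interpret tq V A s t f using assms(1) by unfold_locales
  let ?P1 = "is_tetrahedral V A s t f"
  let ?P2 = "\<forall>a\<in>A. norb A s f a = 3"
  let ?P3 = "\<forall>a\<in>A. gperm A s f (gperm A s f (gperm A s f a)) = a"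
  let ?P4 = "\<exists>b\<in>A. norb A s f b = 3 \<and> norb A s f (bar A s b) = 3 \<and>
              norb A s f (f b) = 3 \<and> norb A s f (f (bar A s b)) = 3"
  have 12: "?P1 \<Longrightarrow> ?P2" using i_to_iii N3 by blast
  have 23: "?P2 \<Longrightarrow> ?P3" using N3 by blast
  have 32: "?P3 \<Longrightarrow> ?P2" using N3 iii_nofix assms(2) by blast
  have 24: "?P2 \<Longrightarrow> ?P4" using A_ne B_in f_in by blast
  have 41: "?P4 \<Longrightarrow> ?P1" using iv_to_i by blast
  show ?thesis using 12 23 32 24 41 by blast
qed

end
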